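(* Let $G=S_\infty$ be the permutation group of $\mathbb{Z}$ with the pointwise convergence topology, let $<$ be the usual order on $\mathbb{Z}$ and let $H=\{g\in G: g\cdot{<}={<}\}$ (the group of order-preserving bijections of $\mathbb{Z}$). Then $(G,H)$ is maximally relatively extremely amenable: $(G,H)$ is relatively extremely amenable, and for every subgroup $E$ with $H\subset E\subset G$ such that $(G,E)$ is relatively extremely amenable, $E=H$.
   Context: A $G$-space is a compact Hausdorff space with a continuous action of $G$. The pair $(G,H)$, with $H\subset G$ a subgroup, is relatively extremely amenable if every $G$-space $X$ has an $H$-fixed point, i.e. some $x_0\in X$ with $hx_0=x_0$ for all $h\in H$. $G$ acts on linear orderings of $\mathbb{Z}$ by $a\,(g\cdot\prec)\,b \iff g^{-1}(a)\prec g^{-1}(b)$. *)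

theory Defs
  imports "HOL-Analysis.Analysis"
begin

text \<open>The symmetric group S_infinity of Z. The type int => int carries the product
  (pointwise convergence) topology, int being discrete; G gets the subspace topology.\<close>
definition Sinf :: "(int \<Rightarrow> int) set" where
  "Sinf = {g. bij g}"

definition order_act :: "(int \<Rightarrow> int) \<Rightarrow> (int \<Rightarrow> int \<Rightarrow> bool) \<Rightarrow> (int \<Rightarrow> int \<Rightarrow> bool)" where
  "order_act g R = (\<lambda>a b. R (inv g a) (inv g b))"

definition H_ord :: "(int \<Rightarrow> int) set" where
  "H_ord = {g \<in> Sinf. order_act g (<) = (<)}"

definition perm_subgroup :: "('b \<Rightarrow> 'b) set \<Rightarrow> ('b \<Rightarrow> 'b) set \<Rightarrow> bool" where
  "perm_subgroup E G \<longleftrightarrow> E \<subseteq> G \<and> id \<in> E \<and> (\<forall>g\<in>E. \<forall>h\<in>E. g \<circ> h \<in> E) \<and> (\<forall>g\<in>E. inv g \<in> E)"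

definition G_space :: "('b::topological_space \<Rightarrow> 'b) set \<Rightarrow> 'a topology \<Rightarrow> (('b \<Rightarrow> 'b) \<Rightarrow> 'a \<Rightarrow> 'a) \<Rightarrow> bool" where
  "G_space G X act \<longleftrightarrow>
     compact_space X \<and> Hausdorff_space X \<and> topspace X \<noteq> {} \<and>
     continuous_map (prod_topology (top_of_set G) X) X (\<lambda>(g, x). act g x) \<and>
     (\<forall>x\<in>topspace X. act id x = x) \<and>
     (\<forall>g\<in>G. \<forall>h\<in>G. \<forall>x\<in>topspace X. act (g \<circ> h) x = act g (act h x))"

text \<open>(G,H) relatively extremely amenable, for G-spaces whose points lie in type 'a.\<close>
definition rel_ext_amenable :: "'a itself \<Rightarrow> ('b::topological_space \<Rightarrow> 'b) set \<Rightarrow> ('b \<Rightarrow> 'b) set \<Rightarrow> bool" where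
  "rel_ext_amenable _ G H \<longleftrightarrow>
     (\<forall>(X::'a topology) act. G_space G X act \<longrightarrow> (\<exists>x0\<in>topspace X. \<forall>h\<in>H. act h x0 = x0))"

end

theory Submission
  imports Defs "HOL-Library.Ramsey"
begin



lemma Sinf_id: "id \<in> Sinf" by (simp add: Sinf_def)
lemma Sinf_comp: "g \<in> Sinf \<Longrightarrow> h \<in> Sinf \<Longrightarrow> g \<circ> h \<in> Sinf" by (simp add: Sinf_def bij_comp)
lemma Sinf_inv: "g \<in> Sinf \<Longrightarrow> inv g \<in> Sinf" by (simp add: Sinf_def bij_imp_bij_inv)

lemma Sinf_nbhd:
  assumes "openin (top_of_set Sinf) V" "id \<in> V"
  shows "\<exists>F. finite F \<and> (\<forall>g\<in>Sinf. (\<forall>n\<in>F. g n = n) \<longrightarrow> g \<in> V)"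
proof -
  obtain Op where O: "open Op" "V = Sinf \<inter> Op" using assms(1) by (auto simp: openin_open)
  have "openin (product_topology (\<lambda>i. euclidean) UNIV) Op" using O(1) unfolding open_fun_def .
  moreover have "id \<in> Op" using assms(2) O(2) by auto
  ultimately have "\<exists>X. id \<in> (\<Pi>\<^sub>E i\<in>UNIV. X i) \<and> (\<forall>i. openin euclidean (X i)) \<and>
     finite {i. X i \<noteq> topspace euclidean} \<and> (\<Pi>\<^sub>E i\<in>UNIV. X i) \<subseteq> Op"
    by (rule product_topology_open_contains_basis)
  then obtain X where X: "id \<in> (\<Pi>\<^sub>E i\<in>UNIV. X i)" "\<forall>i. openin euclidean (X i)"
     "finite {i. X i \<noteq> topspace euclidean}" "(\<Pi>\<^sub>E i\<in>UNIV. X i) \<subseteq> Op"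
    by blast
  show ?thesis
  proof (intro exI conjI ballI impI)
    show "finite {i. X i \<noteq> topspace euclidean}" by fact
    fix g assume g: "g \<in> Sinf" "\<forall>n\<in>{i. X i \<noteq> topspace euclidean}. g n = n"
    have "g \<in> (\<Pi>\<^sub>E i\<in>UNIV. X i)"
    proof -
      have "g i \<in> X i" for i
      proof (cases "X i = topspace euclidean")
        case True then show ?thesis by simp
      next
        case False then have "g i = i" using g by auto
        moreover have "id i \<in> X i" using X(1) by (auto simp: PiE_iff)
        ultimately show ?thesis by simp
      qed
      then show ?thesis by (auto simp: PiE_iff)
    qed
    then show "g \<in> V" using X(4) O(2) g(1) by auto
  qed
qed

lemma cont_at_id:
  assumes GS: "G_space Sinf X act" and y: "y \<in> topspace X" and U: "openin X U" "y \<in> U"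
  shows "\<exists>F W. finite F \<and> openin X W \<and> y \<in> W \<and> (\<forall>g\<in>Sinf. (\<forall>n\<in>F. g n = n) \<longrightarrow> (\<forall>z\<in>W. act g z \<in> U))"
proof -
  have cm: "continuous_map (prod_topology (top_of_set Sinf) X) X (\<lambda>(g, x). act g x)"
    using GS unfolding G_space_def by blast
  define P where "P = {p \<in> topspace (prod_topology (top_of_set Sinf) X). (\<lambda>(g, x). act g x) p \<in> U}"
  have P: "openin (prod_topology (top_of_set Sinf) X) P"
    unfolding P_def using openin_continuous_map_preimage[OF cm U(1)] .
  have "act id y = y" using GS y unfolding G_space_def by blast
  then have "(id, y) \<in> P" using y U Sinf_id unfolding P_def by simp
  then have "\<exists>V W. openin (top_of_set Sinf) V \<and> openin X W \<and> id \<in> V \<and> y \<in> W \<and> V \<times> W \<subseteq> P"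
    using P unfolding openin_prod_topology_alt by blast
  then obtain V W where VW: "openin (top_of_set Sinf) V" "openin X W" "id \<in> V" "y \<in> W" "V \<times> W \<subseteq> P"
    by blast
  obtain F where F: "finite F" "\<forall>g\<in>Sinf. (\<forall>n\<in>F. g n = n) \<longrightarrow> g \<in> V"
    using Sinf_nbhd[OF VW(1) VW(3)] by blast
  show ?thesis
  proof (intro exI[of _ F] exI[of _ W] conjI ballI impI)
    fix g z assume "g \<in> Sinf" "\<forall>n\<in>F. g n = n" "z \<in> W"
    then have "(g, z) \<in> V \<times> W" using F by auto
    then have "(g, z) \<in> P" using VW(5) by blast
    then show "act g z \<in> U" unfolding P_def by simp
  qed (use F VW in auto)
qed




lemma extend_perm:
  fixes f :: "int \<Rightarrow> int"
  assumes "finite D" "inj_on f D"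
  shows "\<exists>\<sigma>\<in>Sinf. \<forall>x\<in>D. \<sigma> x = f x"
proof -
  let ?A = "UNIV - D" and ?B = "UNIV - f ` D"
  have iA: "infinite ?A" using assms(1) by (intro Diff_infinite_finite) auto
  have iB: "infinite ?B" using assms(1) by (intro Diff_infinite_finite) auto
  have bA: "bij_betw (from_nat_into ?A) UNIV ?A" by (rule bij_betw_from_nat_into) (simp_all add: iA)
  have bB: "bij_betw (from_nat_into ?B) UNIV ?B" by (rule bij_betw_from_nat_into) (simp_all add: iB)
  define h where "h = from_nat_into ?B \<circ> inv_into UNIV (from_nat_into ?A)"
  have hb: "bij_betw h ?A ?B" unfolding h_def by (rule bij_betw_trans[OF bij_betw_inv_into[OF bA] bB])
  have fb: "bij_betw f D (f ` D)" using assms(2) by (rule inj_on_imp_bij_betw)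
  have "bij_betw (\<lambda>x. if x \<in> D then f x else h x) (D \<union> ?A) (f ` D \<union> ?B)"
    by (rule bij_betw_disjoint_Un[OF fb hb]) auto
  then have "bij (\<lambda>x. if x \<in> D then f x else h x)" by simp
  then show ?thesis by (intro bexI[of _ "(\<lambda>x. if x \<in> D then f x else h x)"]) (auto simp: Sinf_def)
qed

definition tsh :: "int \<Rightarrow> int" where "tsh = (\<lambda>n. n + 1)"

lemma inv_tsh: "inv tsh = (\<lambda>n. n - 1)"
  by (rule inv_equality) (auto simp: tsh_def)

lemma tsh_Sinf: "tsh \<in> Sinf"
proof -
  have "bij tsh" by (rule bijI) (auto simp: inj_def surj_def tsh_def intro!: exI[of _ "_ - 1"])
  then show ?thesis by (simp add: Sinf_def)
qed

lemma G_space_facts: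
  assumes GS: "G_space Sinf X act"
  shows "\<And>g h x. g\<in>Sinf \<Longrightarrow> h\<in>Sinf \<Longrightarrow> x\<in>topspace X \<Longrightarrow> act (g \<circ> h) x = act g (act h x)"
    and "\<And>x. x \<in> topspace X \<Longrightarrow> act id x = x"
    and "\<And>g x. g\<in>Sinf \<Longrightarrow> x\<in>topspace X \<Longrightarrow> act g x \<in> topspace X"
    and "\<And>g. g \<in> Sinf \<Longrightarrow> continuous_map X X (act g)"
proof -
  have cm: "continuous_map (prod_topology (top_of_set Sinf) X) X (\<lambda>(g, x). act g x)"
    using GS unfolding G_space_def by blast
  show "\<And>g h x. g\<in>Sinf \<Longrightarrow> h\<in>Sinf \<Longrightarrow> x\<in>topspace X \<Longrightarrow> act (g \<circ> h) x = act g (act h x)"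
    using GS unfolding G_space_def by blast
  show "\<And>x. x \<in> topspace X \<Longrightarrow> act id x = x"
    using GS unfolding G_space_def by blast
  show "\<And>g x. g\<in>Sinf \<Longrightarrow> x\<in>topspace X \<Longrightarrow> act g x \<in> topspace X"
  proof -
    fix g x assume "g \<in> Sinf" "x \<in> topspace X"
    then have "(g, x) \<in> topspace (prod_topology (top_of_set Sinf) X)" by simp
    then show "act g x \<in> topspace X" using continuous_map_image_subset_topspace[OF cm] by force
  qed
  show "\<And>g. g \<in> Sinf \<Longrightarrow> continuous_map X X (act g)"
  proof -
    fix g assume g: "g \<in> Sinf"
    have "continuous_map X (prod_topology (top_of_set Sinf) X) (\<lambda>x. (g, x))"
      using g by (intro continuous_map_pairedI) auto
    from continuous_map_compose[OF this cm] show "continuous_map X X (act g)"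
      by (simp add: o_def)
  qed
qed




lemma fix_tsh:
  assumes GS: "G_space Sinf X act"
  shows "\<exists>x\<in>topspace X. act tsh x = x"
proof (rule ccontr)
  assume nf: "\<not> (\<exists>x\<in>topspace X. act tsh x = x)"
  note comp = G_space_facts(1)[OF GS] and inX = G_space_facts(3)[OF GS]
  have ct: "continuous_map X X (act tsh)" using G_space_facts(4)[OF GS tsh_Sinf] .
  have HX: "Hausdorff_space X" and CX: "compact_space X" and NE: "topspace X \<noteq> {}"
    using GS unfolding G_space_def by blast+
  have sep: "\<exists>U. openin X U \<and> y \<in> U \<and> (\<forall>z\<in>U. act tsh z \<notin> U)" if y: "y \<in> topspace X" for y
  proof -
    have ty: "act tsh y \<in> topspace X" "y \<noteq> act tsh y" using inX[OF tsh_Sinf y] nf y by auto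
    then obtain A B where AB: "openin X A" "openin X B" "y \<in> A" "act tsh y \<in> B" "disjnt A B"
      using HX y unfolding Hausdorff_space_def by blast
    define U where "U = A \<inter> {z \<in> topspace X. act tsh z \<in> B}"
    have "openin X U" unfolding U_def
      using AB(1) openin_continuous_map_preimage[OF ct AB(2)] by (rule openin_Int)
    moreover have "y \<in> U" using AB y unfolding U_def by auto
    moreover have "\<forall>z\<in>U. act tsh z \<notin> U" using AB(5) unfolding U_def disjnt_def by auto
    ultimately show ?thesis by blast
  qed
  have "\<exists>U F W. openin X U \<and> y \<in> U \<and> (\<forall>z\<in>U. act tsh z \<notin> U) \<and> finite F \<and> openin X W \<and> y \<in> W \<and>
     (\<forall>g\<in>Sinf. (\<forall>n\<in>F. g n = n) \<longrightarrow> (\<forall>z\<in>W. act g z \<in> U))" if y: "y \<in> topspace X" for y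
  proof -
    obtain U where U: "openin X U" "y \<in> U" "\<forall>z\<in>U. act tsh z \<notin> U" using sep[OF y] by blast
    obtain F W where "finite F \<and> openin X W \<and> y \<in> W \<and> (\<forall>g\<in>Sinf. (\<forall>n\<in>F. g n = n) \<longrightarrow> (\<forall>z\<in>W. act g z \<in> U))"
      using cont_at_id[OF GS y U(1) U(2)] by blast
    then show ?thesis using U by blast
  qed
  then obtain U F W where UFW: "\<And>y. y \<in> topspace X \<Longrightarrow> openin X (U y) \<and> y \<in> U y \<and> (\<forall>z\<in>U y. act tsh z \<notin> U y)
     \<and> finite (F y) \<and> openin X (W y) \<and> y \<in> W y \<and>
     (\<forall>g\<in>Sinf. (\<forall>n\<in>F y. g n = n) \<longrightarrow> (\<forall>z\<in>W y. act g z \<in> U y))"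
    by metis
  have "\<exists>\<V>. finite \<V> \<and> \<V> \<subseteq> W ` topspace X \<and> topspace X \<subseteq> \<Union>\<V>"
  proof -
    have "\<forall>V\<in>W ` topspace X. openin X V" using UFW by blast
    moreover have "topspace X \<subseteq> \<Union>(W ` topspace X)" using UFW by blast
    ultimately show ?thesis using CX unfolding compact_space_def compactin_def by blast
  qed
  then obtain Y0 where Y0: "finite Y0" "Y0 \<subseteq> topspace X" "topspace X \<subseteq> (\<Union>y\<in>Y0. W y)"
    by (metis finite_subset_image)
  have "finite (\<Union>y\<in>Y0. F y)" using Y0 UFW by blast
  then obtain k where k: "abs ` (\<Union>y\<in>Y0. F y) \<subseteq> {..<k}" unfolding finite_int_iff_bounded by blast
  define a where "a = - k"
  define N where "N = nat (2 * k)"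
  define FF where "FF = {a..<a + int N}"
  have FFsub: "n \<in> FF" if "y \<in> Y0" "n \<in> F y" for y n
  proof -
    have "\<bar>n\<bar> < k" using k that by auto
    then show ?thesis unfolding FF_def a_def N_def by auto
  qed
  obtain x0 where x0: "x0 \<in> topspace X" using NE by blast
  have "\<exists>y\<in>Y0. act (inv \<sigma>) x0 \<in> W y" if "\<sigma> \<in> Sinf" for \<sigma>
    using inX[OF Sinf_inv[OF that] x0] Y0(3) by blast
  then obtain yc where yc: "\<And>\<sigma>. \<sigma> \<in> Sinf \<Longrightarrow> yc \<sigma> \<in> Y0 \<and> act (inv \<sigma>) x0 \<in> W (yc \<sigma>)"
    by metis
  have key: "act (inv \<sigma>') x0 \<in> U (yc \<sigma>)"
    if s: "\<sigma> \<in> Sinf" "\<sigma>' \<in> Sinf" and ag: "\<forall>n\<in>FF. \<sigma> n = \<sigma>' n" for \<sigma> \<sigma>'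
  proof -
    define v where "v = inv \<sigma>' \<circ> \<sigma>"
    have vS: "v \<in> Sinf" unfolding v_def using s by (intro Sinf_comp Sinf_inv)
    have bs: "bij \<sigma>" "bij \<sigma>'" using s by (auto simp: Sinf_def)
    have vfix: "\<forall>n\<in>F (yc \<sigma>). v n = n"
    proof
      fix n assume "n \<in> F (yc \<sigma>)"
      then have "n \<in> FF" using FFsub yc[OF s(1)] by blast
      then have "\<sigma> n = \<sigma>' n" using ag by blast
      then show "v n = n" unfolding v_def using bs(2) by (simp add: bij_is_inj)
    qed
    have ycX: "yc \<sigma> \<in> topspace X" using yc[OF s(1)] Y0(2) by blast
    have "act v (act (inv \<sigma>) x0) \<in> U (yc \<sigma>)"
      using UFW[OF ycX] vS vfix yc[OF s(1)] by blast
    moreover have "act v (act (inv \<sigma>) x0) = act (v \<circ> inv \<sigma>) x0"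
      using comp[OF vS Sinf_inv[OF s(1)] x0] by simp
    moreover have "v \<circ> inv \<sigma> = inv \<sigma>'"
    proof -
      have "\<sigma> \<circ> inv \<sigma> = id" using bs(1) by (simp add: bij_is_surj surj_iff[THEN iffD1])
      then show ?thesis unfolding v_def by (metis comp_assoc comp_id)
    qed
    ultimately show ?thesis by simp
  qed
  define sg where "sg A = (SOME \<sigma>. \<sigma> \<in> Sinf \<and> (\<forall>j<N. \<sigma> (a + int j) = sorted_list_of_set A ! j))" for A :: "int set"
  have sgp: "sg A \<in> Sinf \<and> (\<forall>j<N. sg A (a + int j) = sorted_list_of_set A ! j)"
    if A: "finite A" "card A = N" for A
  proof -
    let ?l = "sorted_list_of_set A"
    have l: "distinct ?l" "length ?l = N" using A by auto
    have "inj_on (\<lambda>n. ?l ! nat (n - a)) FF"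
    proof (rule inj_onI)
      fix x y assume "x \<in> FF" "y \<in> FF" "?l ! nat (x - a) = ?l ! nat (y - a)"
      moreover have "nat (x - a) < length ?l" "nat (y - a) < length ?l" using \<open>x \<in> FF\<close> \<open>y \<in> FF\<close> l unfolding FF_def by auto
      ultimately have "nat (x - a) = nat (y - a)" using l(1) nth_eq_iff_index_eq by blast
      then show "x = y" using \<open>x \<in> FF\<close> \<open>y \<in> FF\<close> unfolding FF_def by auto
    qed
    then obtain \<sigma> where "\<sigma> \<in> Sinf" "\<forall>x\<in>FF. \<sigma> x = ?l ! nat (x - a)"
      using extend_perm[of FF] unfolding FF_def by auto
    then have "\<sigma> \<in> Sinf \<and> (\<forall>j<N. \<sigma> (a + int j) = ?l ! j)" unfolding FF_def by auto
    then show ?thesis unfolding sg_def by (rule someI[of "\<lambda>\<sigma>. \<sigma> \<in> Sinf \<and> (\<forall>j<N. \<sigma> (a + int j) = ?l ! j)"])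
  qed
  obtain e where e: "bij_betw e Y0 {0..<card Y0}" using ex_bij_betw_finite_nat[OF Y0(1)] by blast
  define col where "col A = e (yc (sg A))" for A :: "int set"
  have "\<forall>A. A \<subseteq> UNIV \<and> finite A \<and> card A = N \<longrightarrow> col A < card Y0"
  proof (intro allI impI)
    fix A :: "int set" assume "A \<subseteq> UNIV \<and> finite A \<and> card A = N"
    then have "yc (sg A) \<in> Y0" using sgp yc by blast
    then show "col A < card Y0" using e unfolding col_def bij_betw_def by auto
  qed
  from Ramsey[OF infinite_UNIV_int this] obtain Yh c0 where Yh: "infinite Yh"
    "\<forall>A. A \<subseteq> Yh \<and> finite A \<and> card A = N \<longrightarrow> col A = c0" by blast
  obtain B where B: "B \<subseteq> Yh" "finite B" "card B = Suc N" using infinite_arbitrarily_large[OF Yh(1)] by blast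
  define s where "s = sorted_list_of_set B"
  have s: "sorted s" "distinct s" "length s = Suc N" "set s = B" using B unfolding s_def by auto
  define A0 where "A0 = set (take N s)"
  define A1 where "A1 = set (drop 1 s)"
  have l0: "sorted_list_of_set A0 = take N s" unfolding A0_def
    using s by (intro sorted_list_of_set.idem_if_sorted_distinct) (auto intro: sorted_wrt_take)
  have l1: "sorted_list_of_set A1 = drop 1 s" unfolding A1_def
    using s by (intro sorted_list_of_set.idem_if_sorted_distinct) (auto intro: sorted_wrt_drop)
  have c0: "finite A0" "card A0 = N" "A0 \<subseteq> Yh" unfolding A0_def using s B
    by (auto simp: distinct_card dest: in_set_takeD)
  have c1: "finite A1" "card A1 = N" "A1 \<subseteq> Yh" unfolding A1_def using s B
    by (auto simp: distinct_card dest: in_set_dropD)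
  have "col A0 = c0" using Yh(2) c0 by blast
  moreover have "col A1 = c0" using Yh(2) c1 by blast
  ultimately have "col A0 = col A1" by simp
  moreover have "yc (sg A0) \<in> Y0" "yc (sg A1) \<in> Y0" using sgp[OF c0(1,2)] sgp[OF c1(1,2)] yc by blast+
  ultimately have yeq: "yc (sg A0) = yc (sg A1)" using e unfolding col_def bij_betw_def inj_on_def by blast
  let ?D = "{a - 1..<a + int N}"
  have "inj_on (\<lambda>n. s ! nat (n - (a - 1))) ?D"
  proof (rule inj_onI)
    fix x y assume "x \<in> ?D" "y \<in> ?D" "s ! nat (x - (a - 1)) = s ! nat (y - (a - 1))"
    moreover have "nat (x - (a - 1)) < length s" "nat (y - (a - 1)) < length s" using \<open>x \<in> ?D\<close> \<open>y \<in> ?D\<close> s by auto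
    ultimately have "nat (x - (a - 1)) = nat (y - (a - 1))" using s(2) nth_eq_iff_index_eq by blast
    then show "x = y" using \<open>x \<in> ?D\<close> \<open>y \<in> ?D\<close> by auto
  qed
  then obtain \<sigma> where \<sigma>: "\<sigma> \<in> Sinf" "\<forall>x\<in>?D. \<sigma> x = s ! nat (x - (a - 1))"
    using extend_perm[of ?D] by auto
  have ag1: "\<forall>n\<in>FF. sg A1 n = \<sigma> n"
  proof
    fix n assume n: "n \<in> FF"
    define j where "j = nat (n - a)"
    have j: "j < N" "n = a + int j" using n unfolding FF_def j_def by auto
    have "sg A1 n = drop 1 s ! j" using sgp[OF c1(1,2)] j l1 by simp
    also have "\<dots> = s ! Suc j" using s j by simp
    also have "\<dots> = \<sigma> n" using \<sigma>(2) j by (simp add: nat_add_distrib)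
    finally show "sg A1 n = \<sigma> n" .
  qed
  have ag0: "\<forall>n\<in>FF. sg A0 n = (\<sigma> \<circ> inv tsh) n"
  proof
    fix n assume n: "n \<in> FF"
    define j where "j = nat (n - a)"
    have j: "j < N" "n = a + int j" using n unfolding FF_def j_def by auto
    have "sg A0 n = take N s ! j" using sgp[OF c0(1,2)] j l0 by simp
    also have "\<dots> = s ! j" using s j by simp
    also have "\<dots> = (\<sigma> \<circ> inv tsh) n" using \<sigma>(2) j by (simp add: inv_tsh)
    finally show "sg A0 n = (\<sigma> \<circ> inv tsh) n" .
  qed
  have sA0: "sg A0 \<in> Sinf" and sA1: "sg A1 \<in> Sinf" using sgp c0 c1 by blast+
  have st: "\<sigma> \<circ> inv tsh \<in> Sinf" using \<sigma>(1) tsh_Sinf by (intro Sinf_comp Sinf_inv)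
  have z1: "act (inv \<sigma>) x0 \<in> U (yc (sg A1))" using key[OF sA1 \<sigma>(1) ag1] .
  have z0: "act (inv (\<sigma> \<circ> inv tsh)) x0 \<in> U (yc (sg A0))" using key[OF sA0 st ag0] .
  have bt: "bij tsh" "bij \<sigma>" using tsh_Sinf \<sigma>(1) by (auto simp: Sinf_def)
  have "inv (\<sigma> \<circ> inv tsh) = tsh \<circ> inv \<sigma>"
    using bt by (simp add: o_inv_distrib bij_imp_bij_inv inv_inv_eq)
  then have "act (inv (\<sigma> \<circ> inv tsh)) x0 = act tsh (act (inv \<sigma>) x0)"
    using comp[OF tsh_Sinf Sinf_inv[OF \<sigma>(1)] x0] by simp
  with z0 yeq have z0': "act tsh (act (inv \<sigma>) x0) \<in> U (yc (sg A1))" by simp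
  have "yc (sg A1) \<in> topspace X" using \<open>yc (sg A1) \<in> Y0\<close> Y0(2) by blast
  then have "\<forall>z\<in>U (yc (sg A1)). act tsh z \<notin> U (yc (sg A1))" using UFW by blast
  then show False using z1 z0' by blast
qed




lemma shift_Sinf: "(\<lambda>n::int. n + c) \<in> Sinf"
proof -
  have "bij (\<lambda>n::int. n + c)" by (rule bijI) (auto simp: inj_def surj_def intro!: exI[of _ "_ - c"])
  then show ?thesis by (simp add: Sinf_def)
qed

lemma H_ord_shift:
  assumes "h \<in> H_ord"
  shows "\<exists>c. h = (\<lambda>n. n + c)"
proof -
  have hS: "bij h" using assms by (simp add: H_ord_def Sinf_def)
  have oa: "order_act h (<) = (<)" using assms by (simp add: H_ord_def)
  define k where "k = inv h"
  have mono: "(k a < k b) = (a < b)" for a b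
    using fun_cong[OF fun_cong[OF oa, of a], of b] unfolding order_act_def k_def by simp
  have kb: "bij k" unfolding k_def using hS by (rule bij_imp_bij_inv)
  have step: "k (n + 1) = k n + 1" for n
  proof (rule ccontr)
    assume ne: "k (n + 1) \<noteq> k n + 1"
    have "k n < k (n + 1)" using mono by simp
    then have lt: "k n + 1 < k (n + 1)" using ne by simp
    obtain p where p: "k p = k n + 1" using kb unfolding bij_def surj_def by metis
    have "n < p" using mono[of n p] p by simp
    moreover have "p < n + 1" using mono[of p "n+1"] p lt by simp
    ultimately show False by simp
  qed
  have kn: "k n = n + k 0" for n
  proof (induction n rule: int_induct[where k=0])
    case base then show ?case by simp
  next
    case (step1 i) then show ?case using step[of i] by simp
  next
    case (step2 i) then show ?case using step[of "i - 1"] by simp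
  qed
  have "h n = n + (- k 0)" for n
  proof -
    have "k (h n) = n" unfolding k_def using hS by (simp add: bij_is_inj)
    then show ?thesis using kn[of "h n"] by simp
  qed
  then show ?thesis by blast
qed

lemma shift_fix:
  assumes GS: "G_space Sinf X act" and x0: "x0 \<in> topspace X" and t: "act tsh x0 = x0"
  shows "act (\<lambda>n. n + c) x0 = x0"
proof -
  note comp = G_space_facts(1)[OF GS] and idf = G_space_facts(2)[OF GS]
  have bt: "bij tsh" using tsh_Sinf by (simp add: Sinf_def)
  have ti: "act (inv tsh) x0 = x0"
  proof -
    have "act (inv tsh) x0 = act (inv tsh) (act tsh x0)" using t by simp
    also have "\<dots> = act (inv tsh \<circ> tsh) x0" using comp[OF Sinf_inv[OF tsh_Sinf] tsh_Sinf x0] by simp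
    also have "inv tsh \<circ> tsh = id" using bt by (simp add: bij_is_inj)
    finally show ?thesis using idf[OF x0] by (simp add: id_def)
  qed
  have pos: "act (\<lambda>n. n + int m) x0 = x0" for m
  proof (induction m)
    case 0 then show ?case using idf[OF x0] by (simp add: id_def)
  next
    case (Suc m)
    have "act (tsh \<circ> (\<lambda>n. n + int m)) x0 = act tsh (act (\<lambda>n. n + int m) x0)"
      using comp[OF tsh_Sinf shift_Sinf[of "int m"] x0] .
    moreover have "(\<lambda>n. n + int (Suc m)) = tsh \<circ> (\<lambda>n. n + int m)" by (auto simp: tsh_def)
    ultimately show ?case using Suc.IH t by (simp only:)
  qed
  have neg: "act (\<lambda>n. n + - int m) x0 = x0" for m
  proof (induction m)
    case 0 then show ?case using idf[OF x0] by (simp add: id_def)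
  next
    case (Suc m)
    have "act (inv tsh \<circ> (\<lambda>n. n + - int m)) x0 = act (inv tsh) (act (\<lambda>n. n + - int m) x0)"
      using comp[OF Sinf_inv[OF tsh_Sinf] shift_Sinf[of "- int m"] x0] .
    moreover have "(\<lambda>n. n + - int (Suc m)) = inv tsh \<circ> (\<lambda>n. n + - int m)" by (auto simp: inv_tsh)
    ultimately show ?case using Suc.IH ti by (simp only:)
  qed
  show ?thesis
  proof (cases "c \<ge> 0")
    case True then have "c = int (nat c)" by simp
    then obtain m where "c = int m" by blast
    then show ?thesis using pos by simp
  next
    case False then have "c = - int (nat (- c))" by simp
    then obtain m where "c = - int m" by blast
    then show ?thesis using neg by simp
  qed
qed

lemma part1: "rel_ext_amenable TYPE('a) Sinf H_ord"
  unfolding rel_ext_amenable_def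
proof (intro allI impI)
  fix X :: "'a topology" and act assume GS: "G_space Sinf X act"
  obtain x0 where x0: "x0 \<in> topspace X" "act tsh x0 = x0" using fix_tsh[OF GS] by blast
  have "\<forall>h\<in>H_ord. act h x0 = x0"
  proof
    fix h assume "h \<in> H_ord"
    then obtain c where "h = (\<lambda>n. n + c)" using H_ord_shift by blast
    then show "act h x0 = x0" using shift_fix[OF GS x0] by simp
  qed
  then show "\<exists>x0\<in>topspace X. \<forall>h\<in>H_ord. act h x0 = x0" using x0 by blast
qed




definition LO :: "(int \<times> int \<Rightarrow> bool) set" where
  "LO = {R. (\<forall>a. \<not> R (a, a)) \<and> (\<forall>a b c. R (a, b) \<longrightarrow> R (b, c) \<longrightarrow> R (a, c)) \<and>
            (\<forall>a b. a \<noteq> b \<longrightarrow> R (a, b) \<or> R (b, a))}"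

definition lact :: "(int \<Rightarrow> int) \<Rightarrow> (int \<times> int \<Rightarrow> bool) \<Rightarrow> (int \<times> int \<Rightarrow> bool)" where
  "lact g R = (\<lambda>p. R (inv g (fst p), inv g (snd p)))"

lemma open_eval: "open {f :: 'i \<Rightarrow> 'b::discrete_topology. f i \<in> A}"
proof -
  have "open ((\<lambda>f. f i) -` A)"
    by (rule open_vimage) (auto intro: open_discrete)
  then show ?thesis by (simp add: vimage_def)
qed

lemma closed_eval: "closed {f :: 'i \<Rightarrow> 'b::discrete_topology. f i \<in> A}"
proof -
  have "open {f :: 'i \<Rightarrow> 'b. f i \<in> - A}" by (rule open_eval)
  moreover have "{f :: 'i \<Rightarrow> 'b. f i \<in> - A} = - {f. f i \<in> A}" by auto
  ultimately show ?thesis by (simp add: closed_def)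
qed

lemma open_evalT: "open {R :: 'i \<Rightarrow> bool. R i}" and closed_evalT: "closed {R :: 'i \<Rightarrow> bool. R i}"
  and closed_evalF: "closed {R :: 'i \<Rightarrow> bool. \<not> R i}"
  using open_eval[of i "{True}"] closed_eval[of i "{True}"] closed_eval[of i "{False}"] by simp_all

lemma open_const: "open {x. P}" by (cases P) auto

lemma closed_LO: "closed LO"
  unfolding LO_def
  by (intro open_const closed_Collect_conj closed_Collect_all closed_Collect_imp closed_Collect_disj
      open_evalT closed_evalT closed_evalF closed_Collect_const)

lemma Hausdorff_bool: "Hausdorff_space (euclidean :: bool topology)"
  unfolding Hausdorff_space_def
  by (intro allI impI exI[of _ "{_}"]) (auto simp: open_discrete disjnt_def)

lemma Hausdorff_R: "Hausdorff_space (euclidean :: (int \<times> int \<Rightarrow> bool) topology)"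
proof -
  have "Hausdorff_space (product_topology (\<lambda>i::int\<times>int. (euclidean::bool topology)) UNIV)"
    using Hausdorff_bool Hausdorff_space_product_topology by blast
  then show ?thesis by (simp add: euclidean_product_topology)
qed

lemma compact_R: "compact (UNIV :: (int \<times> int \<Rightarrow> bool) set)"
proof -
  have "compact_space (euclidean :: bool topology)"
    unfolding compact_space_def by (simp add: finite_imp_compact)
  then have "compact_space (product_topology (\<lambda>i::int\<times>int. (euclidean::bool topology)) UNIV)"
    using compact_space_product_topology by blast
  then have "compact_space (euclidean :: (int \<times> int \<Rightarrow> bool) topology)"
    by (simp add: euclidean_product_topology)
  then show ?thesis unfolding compact_space_def by simp
qed

lemma compact_LO: "compact LO"
  using compact_Int_closed[OF compact_R closed_LO] by simp

lemma less_LO: "(\<lambda>p. fst p < snd p) \<in> LO"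
  unfolding LO_def by auto

lemma lact_LO:
  assumes g: "g \<in> Sinf" and R: "R \<in> LO"
  shows "lact g R \<in> LO"
proof -
  have "inj (inv g)" using g by (simp add: Sinf_def bij_imp_bij_inv bij_is_inj)
  then show ?thesis using R unfolding LO_def lact_def by (simp, metis injD)
qed

lemma lact_id: "lact id R = R"
  by (simp add: lact_def inv_id)

lemma lact_comp:
  assumes "g \<in> Sinf" "h \<in> Sinf"
  shows "lact (g \<circ> h) R = lact g (lact h R)"
proof -
  have "inv (g \<circ> h) = inv h \<circ> inv g" using assms by (simp add: Sinf_def o_inv_distrib)
  then show ?thesis by (simp add: lact_def)
qed




lemma cont_coord:
  "continuous_map (prod_topology (top_of_set Sinf) (top_of_set LO)) euclidean
     (\<lambda>x. (case x of (g, R) \<Rightarrow> lact g R) k)"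
  unfolding continuous_map
proof (intro conjI allI impI)
  show "(\<lambda>x. (case x of (g, R) \<Rightarrow> lact g R) k) ` topspace (prod_topology (top_of_set Sinf) (top_of_set LO))
         \<subseteq> topspace euclidean" by simp
  fix U :: "bool set"
  let ?X = "prod_topology (top_of_set Sinf) (top_of_set LO)"
  show "openin ?X {x \<in> topspace ?X. (case x of (g, R) \<Rightarrow> lact g R) k \<in> U}"
  proof (subst openin_subopen, intro ballI)
    fix x assume x: "x \<in> {x \<in> topspace ?X. (case x of (g, R) \<Rightarrow> lact g R) k \<in> U}"
    obtain g R where gR: "x = (g, R)" by (cases x)
    obtain a b where k: "k = (a, b)" by (cases k)
    have g: "g \<in> Sinf" and R: "R \<in> LO" and inU: "R (inv g a, inv g b) \<in> U"
      using x gR k by (auto simp: lact_def)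
    define m where "m = inv g a"
    define n where "n = inv g b"
    have bg: "bij g" using g by (simp add: Sinf_def)
    define T1 where "T1 = Sinf \<inter> ({g'. g' m \<in> {a}} \<inter> {g'. g' n \<in> {b}})"
    define T2 where "T2 = LO \<inter> {R'. R' (m, n) \<in> {R (m, n)}}"
    have o1: "openin (top_of_set Sinf) T1" unfolding T1_def
      by (intro openin_open_Int open_Int open_eval)
    have o2: "openin (top_of_set LO) T2" unfolding T2_def
      by (intro openin_open_Int open_eval)
    have gm: "g m = a" "g n = b" unfolding m_def n_def using bg
      by (simp_all add: bij_is_surj surj_f_inv_f)
    then have xT: "x \<in> T1 \<times> T2" using gR g R unfolding T1_def T2_def by simp
    have sub: "T1 \<times> T2 \<subseteq> {x \<in> topspace ?X. (case x of (g, R) \<Rightarrow> lact g R) k \<in> U}"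
    proof
      fix p assume "p \<in> T1 \<times> T2"
      then obtain g' R' where p: "p = (g', R')" "g' \<in> T1" "R' \<in> T2" by blast
      then have h: "g' \<in> Sinf" "g' m = a" "g' n = b" "R' \<in> LO" "R' (m, n) = R (m, n)"
        unfolding T1_def T2_def by auto
      have ig: "inj g'" using h(1) by (simp add: Sinf_def bij_is_inj)
      have "inv g' a = m" using inv_f_f[OF ig, of m] h(2) by simp
      moreover have "inv g' b = n" using inv_f_f[OF ig, of n] h(3) by simp
      moreover have "R (m, n) \<in> U" using inU unfolding m_def n_def .
      ultimately have l1: "lact g' R' k \<in> U"
        using h(5) k unfolding lact_def by simp
      have l2: "(g', R') \<in> topspace ?X" using h(1,4) by simp
      show "p \<in> {x \<in> topspace ?X. (case x of (g, R) \<Rightarrow> lact g R) k \<in> U}"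
        unfolding p(1) mem_Collect_eq case_prod_conv using l1 l2 by (rule conjI[rotated])
    qed
    show "\<exists>T. openin ?X T \<and> x \<in> T \<and> T \<subseteq> {x \<in> topspace ?X. (case x of (g, R) \<Rightarrow> lact g R) k \<in> U}"
    proof (intro exI[of _ "T1 \<times> T2"] conjI xT sub)
      show "openin ?X (T1 \<times> T2)" unfolding openin_prod_Times_iff using o1 o2 by blast
    qed
  qed
qed




lemma G_space_LO: "G_space Sinf (top_of_set LO) (\<lambda>g R. lact g R)"
  unfolding G_space_def
proof (intro conjI ballI)
  show "compact_space (top_of_set LO)"
    using compact_LO by (simp add: compact_space_subtopology)
  show "Hausdorff_space (top_of_set LO)"
    using Hausdorff_R by (rule Hausdorff_space_subtopology)
  show "topspace (top_of_set LO) \<noteq> {}" using less_LO by auto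
  show "continuous_map (prod_topology (top_of_set Sinf) (top_of_set LO)) (top_of_set LO) (\<lambda>(g, R). lact g R)"
  proof -
    have "continuous_map (prod_topology (top_of_set Sinf) (top_of_set LO))
        (product_topology (\<lambda>i. euclidean) UNIV) (\<lambda>(g, R). lact g R)"
      unfolding continuous_map_componentwise_UNIV using cont_coord by blast
    then have c1: "continuous_map (prod_topology (top_of_set Sinf) (top_of_set LO)) euclidean (\<lambda>(g, R). lact g R)"
      by (simp add: euclidean_product_topology)
    have c2: "(\<lambda>(g, R). lact g R) \<in> topspace (prod_topology (top_of_set Sinf) (top_of_set LO)) \<rightarrow> LO"
      using lact_LO by auto
    show ?thesis unfolding continuous_map_in_subtopology using c1 c2 by blast
  qed
  show "\<And>x. x \<in> topspace (top_of_set LO) \<Longrightarrow> lact id x = x" by (simp add: lact_id)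
  show "\<And>g h x. g \<in> Sinf \<Longrightarrow> h \<in> Sinf \<Longrightarrow> x \<in> topspace (top_of_set LO) \<Longrightarrow> lact (g \<circ> h) x = lact g (lact h x)"
    by (simp add: lact_comp)
qed




lemma transport:
  fixes f :: "'b \<Rightarrow> 'c"
  assumes GS: "G_space Sinf X act" and inj: "inj f"
  shows "G_space Sinf (pullback_topology (f ` topspace X) (inv f) X) (\<lambda>g y. f (act g (inv f y)))"
    and "topspace (pullback_topology (f ` topspace X) (inv f) X) = f ` topspace X"
proof -
  let ?X' = "pullback_topology (f ` topspace X) (inv f) X"
  have ivf: "inv f (f x) = x" for x using inj by simp
  show tX': "topspace ?X' = f ` topspace X"
    unfolding topspace_pullback_topology using ivf by auto
  have io: "inv f \<circ> f = id" using inj by simp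
  have cf: "continuous_map X ?X' f"
    by (rule continuous_map_pullback') (auto simp: io)
  have cinv0: "continuous_map ?X' X (id \<circ> inv f)"
    by (rule continuous_map_pullback) simp
  then have cinv: "continuous_map ?X' X (inv f)" by simp
  have hm: "homeomorphic_maps X ?X' f (inv f)"
    unfolding homeomorphic_maps_def using cf cinv ivf tX' by auto
  then have hs: "X homeomorphic_space ?X'" unfolding homeomorphic_space_def by blast
  note comp = G_space_facts(1)[OF GS] and idf = G_space_facts(2)[OF GS] and inX = G_space_facts(3)[OF GS]
  have cm: "continuous_map (prod_topology (top_of_set Sinf) X) X (\<lambda>(g, x). act g x)"
    using GS unfolding G_space_def by blast
  have c1: "continuous_map (prod_topology (top_of_set Sinf) ?X') (prod_topology (top_of_set Sinf) X)
      (\<lambda>p. (fst p, inv f (snd p)))"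
    by (intro continuous_map_pairedI continuous_map_fst continuous_map_compose[OF continuous_map_snd cinv, unfolded o_def])
  have c: "continuous_map (prod_topology (top_of_set Sinf) ?X') ?X'
      (f \<circ> ((\<lambda>(g, x). act g x) \<circ> (\<lambda>p. (fst p, inv f (snd p)))))"
    by (intro continuous_map_compose[OF continuous_map_compose[OF c1 cm] cf])
  have e: "(f \<circ> ((\<lambda>(g, x). act g x) \<circ> (\<lambda>p. (fst p, inv f (snd p))))) = (\<lambda>(g, y). f (act g (inv f y)))"
    by (auto simp: fun_eq_iff)
  show "G_space Sinf ?X' (\<lambda>g y. f (act g (inv f y)))"
    unfolding G_space_def
  proof (intro conjI ballI)
    show "compact_space ?X'" using GS homeomorphic_compact_space[OF hs] unfolding G_space_def by blast
    show "Hausdorff_space ?X'" using GS homeomorphic_Hausdorff_space[OF hs] unfolding G_space_def by blast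
    show "topspace ?X' \<noteq> {}" using GS tX' unfolding G_space_def by auto
    show "continuous_map (prod_topology (top_of_set Sinf) ?X') ?X' (\<lambda>(g, y). f (act g (inv f y)))"
      using c unfolding e .
    fix y assume y: "y \<in> topspace ?X'"
    then obtain x where x: "x \<in> topspace X" "y = f x" using tX' by auto
    show "f (act id (inv f y)) = y" using x idf ivf by simp
    fix g h assume gh: "g \<in> Sinf" "h \<in> Sinf"
    show "f (act (g \<circ> h) (inv f y)) = f (act g (inv f (f (act h (inv f y)))))"
      using x gh comp ivf by simp
  qed
qed




definition pf :: "int \<times> int \<Rightarrow> int \<Rightarrow> int" where "pf p = (\<lambda>n. if n = 0 then fst p else snd p)"
definition enc :: "(int \<times> int \<Rightarrow> bool) \<Rightarrow> (int \<Rightarrow> int) set set" where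
  "enc R = (\<lambda>p. {pf p}) ` {p. R p}"

lemma inj_pf: "inj (\<lambda>p. {pf p})"
proof (rule injI)
  fix p q assume "{pf p} = {pf q}"
  then have "pf p = pf q" by simp
  then have "pf p 0 = pf q 0" "pf p 1 = pf q 1" by simp_all
  then show "p = q" unfolding pf_def by (simp add: prod_eq_iff)
qed

lemma inj_enc: "inj enc"
proof (rule injI)
  fix R R' assume eq: "enc R = enc R'"
  have "R p = R' p" for p
  proof -
    have "R p \<longleftrightarrow> {pf p} \<in> enc R" unfolding enc_def using inj_image_mem_iff[OF inj_pf] by simp
    moreover have "R' p \<longleftrightarrow> {pf p} \<in> enc R'" unfolding enc_def using inj_image_mem_iff[OF inj_pf] by simp
    ultimately show ?thesis using eq by simp
  qed
  then show "R = R'" by auto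
qed

lemma inv_order_less:
  assumes R: "R \<in> LO" and iv: "\<And>a b c. R (a + c, b + c) = R (a, b)" and r01: "R (0, 1)"
  shows "R = (\<lambda>p. fst p < snd p)"
proof -
  have irr: "\<not> R (a, a)" for a using R unfolding LO_def by blast
  have tr: "R (a, b) \<Longrightarrow> R (b, c) \<Longrightarrow> R (a, c)" for a b c using R unfolding LO_def by blast
  have step: "R (n, n + 1)" for n using iv[where a=0 and b=1 and c=n] r01 by (simp add: add.commute)
  have up: "R (a, a + int k + 1)" for a k
  proof (induction k)
    case 0 then show ?case using step[of a] by simp
  next
    case (Suc k)
    have "R (a + int k + 1, a + int (Suc k) + 1)" using step[of "a + int k + 1"] by simp
    then show ?case using tr[OF Suc.IH] by blast
  qed
  have lt: "R (a, b)" if "a < b" for a b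
  proof -
    have "b = a + int (nat (b - a - 1)) + 1" using that by simp
    then show ?thesis using up[of a "nat (b - a - 1)"] by metis
  qed
  have gt: "a < b" if "R (a, b)" for a b
  proof (rule ccontr)
    assume "\<not> a < b"
    then have "b = a \<or> b < a" by auto
    then show False
    proof
      assume "b = a" then show False using that irr by simp
    next
      assume "b < a" then have "R (b, a)" by (rule lt)
      then show False using tr[OF that] irr by blast
    qed
  qed
  show ?thesis
  proof
    fix p show "R p = (fst p < snd p)" using lt gt by (cases p) auto
  qed
qed

lemma inv_order:
  assumes R: "R \<in> LO" and iv: "\<And>a b c. R (a + c, b + c) = R (a, b)"
  shows "R = (\<lambda>p. fst p < snd p) \<or> R = (\<lambda>p. snd p < fst p)"
proof (cases "R (0, 1)")
  case True then show ?thesis using inv_order_less[OF R iv] by blast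
next
  case False
  have tot: "\<forall>a b. a \<noteq> b \<longrightarrow> R (a, b) \<or> R (b, a)" using R unfolding LO_def by blast
  have r10: "R (1, 0)" using tot[rule_format, of 0 1] False by simp
  define R' where "R' = (\<lambda>p. R (snd p, fst p))"
  have irr: "\<forall>a. \<not> R (a, a)" and tr: "\<forall>a b c. R (a, b) \<longrightarrow> R (b, c) \<longrightarrow> R (a, c)"
    using R unfolding LO_def by blast+
  have "R' \<in> LO" using irr tr tot unfolding LO_def R'_def
    by (simp only: mem_Collect_eq fst_conv snd_conv) blast
  moreover have "R' (a + c, b + c) = R' (a, b)" for a b c unfolding R'_def using iv by simp
  moreover have "R' (0, 1)" unfolding R'_def using r10 by simp
  ultimately have R'eq: "R' = (\<lambda>p. fst p < snd p)" by (rule inv_order_less)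
  have "R = (\<lambda>p. snd p < fst p)"
  proof
    fix p
    have "R' (snd p, fst p) = (snd p < fst p)" using R'eq by simp
    then show "R p = (snd p < fst p)" unfolding R'_def by simp
  qed
  then show ?thesis by blast
qed




lemma shift_H: "(\<lambda>n::int. n + c) \<in> H_ord"
proof -
  have iv: "inv (\<lambda>n::int. n + c) = (\<lambda>n. n - c)" by (rule inv_equality) auto
  show ?thesis unfolding H_ord_def using shift_Sinf by (simp add: order_act_def iv)
qed

lemma part2:
  assumes E: "H_ord \<subseteq> E" "E \<subseteq> Sinf"
    and A: "rel_ext_amenable TYPE((int \<Rightarrow> int) set set) Sinf E"
  shows "E = H_ord"
proof
  show "H_ord \<subseteq> E" by fact
  let ?X' = "pullback_topology (enc ` topspace (top_of_set LO)) (inv enc) (top_of_set LO)"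
  have GS': "G_space Sinf ?X' (\<lambda>g y. enc (lact g (inv enc y)))"
    using transport(1)[OF G_space_LO inj_enc] .
  have tX': "topspace ?X' = enc ` LO" using transport(2)[OF G_space_LO inj_enc] by simp
  obtain y0 where y0: "y0 \<in> topspace ?X'" "\<forall>h\<in>E. enc (lact h (inv enc y0)) = y0"
    using A GS' unfolding rel_ext_amenable_def by blast
  then obtain R0 where R0: "R0 \<in> LO" "y0 = enc R0" using tX' by auto
  have ie: "inv enc (enc R) = R" for R using inj_enc by simp
  have fixR: "lact h R0 = R0" if "h \<in> E" for h
  proof -
    have "enc (lact h R0) = enc R0" using y0(2) that R0(2) ie by simp
    then show ?thesis using inj_enc by (simp add: inj_eq)
  qed
  have iv: "R0 (a + c, b + c) = R0 (a, b)" for a b c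
  proof -
    have "(\<lambda>n::int. n + - c) \<in> E" using shift_H E(1) by blast
    moreover have "(\<lambda>n::int. n + - c) = (\<lambda>n. n - c)" by auto
    ultimately have hE: "(\<lambda>n::int. n - c) \<in> E" by simp
    have fx: "lact (\<lambda>n. n - c) R0 = R0" by (rule fixR[OF hE])
    have inveq: "inv (\<lambda>n::int. n - c) = (\<lambda>n. n + c)" by (rule inv_equality) auto
    have "lact (\<lambda>n. n - c) R0 (a, b) = R0 (a + c, b + c)" by (simp add: lact_def inveq)
    then show ?thesis using fx by simp
  qed
  show "E \<subseteq> H_ord"
  proof
    fix h assume hE: "h \<in> E"
    have hS: "h \<in> Sinf" using hE E(2) by blast
    have lh: "R0 (inv h a, inv h b) = R0 (a, b)" for a b
      using fun_cong[OF fixR[OF hE], of "(a, b)"] by (simp add: lact_def)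
    have "order_act h (<) = (<)"
    proof (intro ext)
      fix a b :: int
      from inv_order[OF R0(1) iv] show "order_act h (<) a b = (a < b)"
      proof
        assume "R0 = (\<lambda>p. fst p < snd p)"
        then show ?thesis using lh[of a b] by (simp add: order_act_def)
      next
        assume "R0 = (\<lambda>p. snd p < fst p)"
        then show ?thesis using lh[of b a] by (simp add: order_act_def)
      qed
    qed
    then show "h \<in> H_ord" using hS by (simp add: H_ord_def)
  qed
qed

theorem mainTheorem8:
  shows "rel_ext_amenable TYPE('a) Sinf H_ord \<and>
    (\<forall>E. perm_subgroup E Sinf \<and> H_ord \<subseteq> E \<and> E \<subseteq> Sinf \<and>
         rel_ext_amenable TYPE((int \<Rightarrow> int) set set) Sinf E \<longrightarrow> E = H_ord)"
  using part1 part2 by blast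



end
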